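(* Let $F$ be a closed continuous frieze pattern with period $T$. Then there is a $T$-periodic function $k:\mathbb{R}\to\mathbb{R}$ such that, for all $x,y$, $$F_{xx}(x,y)=k(x)F(x,y),\qquad F_{yy}(x,y)=k(y)F(x,y),$$ i.e. $F$, as a function of $x$ alone or of $y$ alone, satisfies the same Hill equation $u''=k u$; moreover every solution of $u''=ku$ is $T$-antiperiodic, $u(t+T)=-u(t)$ (the monodromy is $-\mathrm{Id}$).
   Context: A closed continuous frieze pattern with period $T>0$ is a smooth function $F:\mathbb{R}^2\to\mathbb{R}$ satisfying the Liouville-type equation $F F_{xy}-F_xF_y=1$ on $\mathbb{R}^2$ together with the conditions: $F(x,x)=0$ and $F_y(x,x)=1$ for all $x$ (here $F_y(x,x)$ means $\partial F/\partial y$ evaluated at $(x,x)$); $F(x,y)>0$ whenever $x<y<x+T$; and $F(x+T,y)=F(x,y+T)=-F(x,y)$ for all $x,y$. *)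

theory Defs
  imports "HOL-Analysis.Analysis"
begin

definition pdx :: "(real \<Rightarrow> real \<Rightarrow> real) \<Rightarrow> real \<Rightarrow> real \<Rightarrow> real" where
  "pdx F x y = deriv (\<lambda>s. F s y) x"

definition pdy :: "(real \<Rightarrow> real \<Rightarrow> real) \<Rightarrow> real \<Rightarrow> real \<Rightarrow> real" where
  "pdy F x y = deriv (\<lambda>t. F x t) y"

inductive_set iter_partials :: "(real \<Rightarrow> real \<Rightarrow> real) \<Rightarrow> (real \<Rightarrow> real \<Rightarrow> real) set"
  for F where
  base: "F \<in> iter_partials F"
| dx: "G \<in> iter_partials F \<Longrightarrow> pdx G \<in> iter_partials F"
| dy: "G \<in> iter_partials F \<Longrightarrow> pdy G \<in> iter_partials F"

definition smooth2 :: "(real \<Rightarrow> real \<Rightarrow> real) \<Rightarrow> bool" where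
  "smooth2 F \<longleftrightarrow> (\<forall>G \<in> iter_partials F.
      (\<forall>x y. (\<lambda>s. G s y) differentiable (at x) \<and> (\<lambda>t. G x t) differentiable (at y)) \<and>
      continuous_on UNIV (\<lambda>p. G (fst p) (snd p)))"

definition closed_frieze :: "real \<Rightarrow> (real \<Rightarrow> real \<Rightarrow> real) \<Rightarrow> bool" where
  "closed_frieze T F \<longleftrightarrow> T > 0 \<and> smooth2 F \<and>
     (\<forall>x y. F x y * pdy (pdx F) x y - pdx F x y * pdy F x y = 1) \<and>
     (\<forall>x. F x x = 0) \<and> (\<forall>x. pdy F x x = 1) \<and>
     (\<forall>x y. x < y \<and> y < x + T \<longrightarrow> F x y > 0) \<and>
     (\<forall>x y. F (x + T) y = - F x y) \<and> (\<forall>x y. F x (y + T) = - F x y)"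

end

theory Submission
  imports Defs
begin

lemma ip_dx: "smooth2 F \<Longrightarrow> G \<in> iter_partials F \<Longrightarrow> ((\<lambda>s. G s y) has_real_derivative pdx G x y) (at x)"
  unfolding smooth2_def pdx_def using DERIV_deriv_iff_real_differentiable by blast

lemma ip_dy: "smooth2 F \<Longrightarrow> G \<in> iter_partials F \<Longrightarrow> ((\<lambda>t. G x t) has_real_derivative pdy G x y) (at y)"
  unfolding smooth2_def pdy_def using DERIV_deriv_iff_real_differentiable by blast

lemma ip_cont: "smooth2 F \<Longrightarrow> G \<in> iter_partials F \<Longrightarrow> isCont (\<lambda>p. G (fst p) (snd p)) p"
  unfolding smooth2_def by (meson continuous_on_eq_continuous_at open_UNIV UNIV_I)

lemma ip_eps:
  assumes "smooth2 F" "G \<in> iter_partials F" "e > 0"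
  shows "\<exists>d>0. \<forall>s t. \<bar>s - x\<bar> < d \<and> \<bar>t - y\<bar> < d \<longrightarrow> \<bar>G s t - G x y\<bar> < e"
proof -
  from ip_cont[OF assms(1,2), of "(x,y)"] assms(3) obtain d where d: "d > 0"
    "\<And>p. dist p (x,y) < d \<Longrightarrow> dist (G (fst p) (snd p)) (G x y) < e"
    unfolding continuous_at_eps_delta by fastforce
  show ?thesis
  proof (intro exI[of _ "d/2"] conjI allI impI)
    fix s t assume st: "\<bar>s - x\<bar> < d/2 \<and> \<bar>t - y\<bar> < d/2"
    have "dist (s,t) (x,y) \<le> dist s x + dist t y"
      using sqrt_sum_squares_le_sum[of "dist s x" "dist t y"] by (simp add: dist_Pair_Pair)
    also have "\<dots> < d" using st by (simp add: dist_real_def)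
    finally show "\<bar>G s t - G x y\<bar> < e" using d(2)[of "(s,t)"] by (simp add: dist_real_def)
  qed (use d in auto)
qed

lemma abs_aux: "\<bar>(a::real) - c\<bar> < \<bar>c - d\<bar> / 2 \<Longrightarrow> \<bar>b - d\<bar> < \<bar>c - d\<bar> / 2 \<Longrightarrow> a = b \<Longrightarrow> False"
  by (simp add: abs_if split: if_splits)

lemma schwarz:
  assumes sm: "smooth2 F" and G: "G \<in> iter_partials F"
  shows "pdy (pdx G) x y = pdx (pdy G) x y"
proof (rule ccontr)
  let ?Gx = "pdx G" and ?Gy = "pdy G" and ?A = "pdy (pdx G)" and ?B = "pdx (pdy G)"
  have Gx: "?Gx \<in> iter_partials F" and Gy: "?Gy \<in> iter_partials F" using G iter_partials.intros by auto
  have A: "?A \<in> iter_partials F" and B: "?B \<in> iter_partials F" using Gx Gy iter_partials.intros by auto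
  assume ne: "?A x y \<noteq> ?B x y"
  define e where "e = \<bar>?A x y - ?B x y\<bar> / 2"
  have e: "e > 0" using ne by (simp add: e_def)
  obtain d1 where d1: "d1 > 0" "\<And>s t. \<bar>s - x\<bar> < d1 \<Longrightarrow> \<bar>t - y\<bar> < d1 \<Longrightarrow> \<bar>?A s t - ?A x y\<bar> < e"
    using ip_eps[OF sm A e, of x y] by blast
  obtain d2 where d2: "d2 > 0" "\<And>s t. \<bar>s - x\<bar> < d2 \<Longrightarrow> \<bar>t - y\<bar> < d2 \<Longrightarrow> \<bar>?B s t - ?B x y\<bar> < e"
    using ip_eps[OF sm B e, of x y] by blast
  define h where "h = min d1 d2 / 2"
  have h: "h > 0" "h < d1" "h < d2" using d1 d2 by (auto simp: h_def)
  define D where "D = G (x+h) (y+h) - G (x+h) y - G x (y+h) + G x y"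
  have der1: "\<And>s. ((\<lambda>s. G s (y+h) - G s y) has_real_derivative (?Gx s (y+h) - ?Gx s y)) (at s)"
    by (auto intro!: derivative_intros ip_dx[OF sm G])
  from MVT2[of x "x+h" _ "\<lambda>s. ?Gx s (y+h) - ?Gx s y", OF _ der1] h obtain \<xi> where \<xi>: "x < \<xi>" "\<xi> < x + h"
    "(G (x+h) (y+h) - G (x+h) y) - (G x (y+h) - G x y) = h * (?Gx \<xi> (y+h) - ?Gx \<xi> y)"
    by auto
  from MVT2[of y "y+h" "\<lambda>t. ?Gx \<xi> t" "\<lambda>t. ?A \<xi> t", OF _ ip_dy[OF sm Gx]] h
  obtain \<eta> where \<eta>: "y < \<eta>" "\<eta> < y + h" "?Gx \<xi> (y+h) - ?Gx \<xi> y = h * ?A \<xi> \<eta>"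
    by auto
  have der2: "\<And>t. ((\<lambda>t. G (x+h) t - G x t) has_real_derivative (?Gy (x+h) t - ?Gy x t)) (at t)"
    by (auto intro!: derivative_intros ip_dy[OF sm G])
  from MVT2[of y "y+h" _ "\<lambda>t. ?Gy (x+h) t - ?Gy x t", OF _ der2] h obtain \<eta>' where \<eta>': "y < \<eta>'" "\<eta>' < y + h"
    "(G (x+h) (y+h) - G x (y+h)) - (G (x+h) y - G x y) = h * (?Gy (x+h) \<eta>' - ?Gy x \<eta>')"
    by auto
  from MVT2[of x "x+h" "\<lambda>s. ?Gy s \<eta>'" "\<lambda>s. ?B s \<eta>'", OF _ ip_dx[OF sm Gy]] h
  obtain \<xi>' where \<xi>': "x < \<xi>'" "\<xi>' < x + h" "?Gy (x+h) \<eta>' - ?Gy x \<eta>' = h * ?B \<xi>' \<eta>'"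
    by auto
  have "D = h * (h * ?A \<xi> \<eta>)" using \<xi> \<eta> by (simp add: D_def algebra_simps)
  moreover have "D = h * (h * ?B \<xi>' \<eta>')" using \<xi>' \<eta>' by (simp add: D_def algebra_simps)
  ultimately have eq: "?A \<xi> \<eta> = ?B \<xi>' \<eta>'" using h by simp
  have "\<bar>?A \<xi> \<eta> - ?A x y\<bar> < e" using d1(2) \<xi> \<eta> h by auto
  moreover have "\<bar>?B \<xi>' \<eta>' - ?B x y\<bar> < e" using d2(2) \<xi>' \<eta>' h by auto
  ultimately show False using eq abs_aux unfolding e_def by metis
qed


lemma ip_anti:
  assumes sm: "smooth2 F" and px: "\<forall>x y. F (x+T) y = - F x y" and py: "\<forall>x y. F x (y+T) = - F x y"
    and G: "G \<in> iter_partials F"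
  shows "(\<forall>x y. G (x+T) y = - G x y) \<and> (\<forall>x y. G x (y+T) = - G x y)"
  using G
proof (induction rule: iter_partials.induct)
  case base then show ?case using px py by blast
next
  case (dx G)
  have G': "pdx G \<in> iter_partials F" using dx.hyps iter_partials.dx by blast
  have 1: "pdx G (x+T) y = - pdx G x y" for x y
  proof -
    have "((\<lambda>s. G (s+T) y) has_real_derivative pdx G (x+T) y) (at x)"
      using DERIV_shift[of "\<lambda>s. G s y" _ x T] ip_dx[OF sm dx.hyps, of y "x+T"] by simp
    moreover have "((\<lambda>s. G (s+T) y) has_real_derivative - pdx G x y) (at x)"
      using dx.IH DERIV_minus[OF ip_dx[OF sm dx.hyps, of y x]] by simp
    ultimately show ?thesis by (rule DERIV_unique)
  qed
  have 2: "pdx G x (y+T) = - pdx G x y" for x y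
  proof -
    have "((\<lambda>s. G s (y+T)) has_real_derivative pdx G x (y+T)) (at x)"
      using ip_dx[OF sm dx.hyps] by blast
    moreover have "((\<lambda>s. G s (y+T)) has_real_derivative - pdx G x y) (at x)"
      using dx.IH DERIV_minus[OF ip_dx[OF sm dx.hyps, of y x]] by simp
    ultimately show ?thesis by (rule DERIV_unique)
  qed
  show ?case using 1 2 by blast
next
  case (dy G)
  have 1: "pdy G x (y+T) = - pdy G x y" for x y
  proof -
    have "((\<lambda>t. G x (t+T)) has_real_derivative pdy G x (y+T)) (at y)"
      using DERIV_shift[of "\<lambda>t. G x t" _ y T] ip_dy[OF sm dy.hyps, of x "y+T"] by simp
    moreover have "((\<lambda>t. G x (t+T)) has_real_derivative - pdy G x y) (at y)"
      using dy.IH DERIV_minus[OF ip_dy[OF sm dy.hyps, of x y]] by simp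
    ultimately show ?thesis by (rule DERIV_unique)
  qed
  have 2: "pdy G (x+T) y = - pdy G x y" for x y
  proof -
    have "((\<lambda>t. G (x+T) t) has_real_derivative pdy G (x+T) y) (at y)"
      using ip_dy[OF sm dy.hyps] by blast
    moreover have "((\<lambda>t. G (x+T) t) has_real_derivative - pdy G x y) (at y)"
      using dy.IH DERIV_minus[OF ip_dy[OF sm dy.hyps, of x y]] by simp
    ultimately show ?thesis by (rule DERIV_unique)
  qed
  show ?case using 1 2 by blast
qed

lemma ip_diag:
  assumes sm: "smooth2 F" and G: "G \<in> iter_partials F"
  shows "((\<lambda>x. G x x) has_real_derivative (pdx G x x + pdy G x x)) (at x)"
proof -
  have Gy: "pdy G \<in> iter_partials F" using G iter_partials.dy by blast
  have c: "isCont (\<lambda>p. pdy G (fst p) (snd p)) p" for p using ip_cont[OF sm Gy] .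
  have fx: "((\<lambda>s. G s x) has_derivative (*) (pdx G x x)) (at x within UNIV)"
    using ip_dx[OF sm G] has_field_derivative_imp_has_derivative by blast
  have fy: "((\<lambda>t. G s t) has_derivative blinfun_apply (blinfun_mult_right (pdy G s t))) (at t within UNIV)" for s t
    using has_field_derivative_imp_has_derivative[OF ip_dy[OF sm G, of s t]] by simp
  have ct: "continuous (at (x, x) within UNIV \<times> UNIV) (\<lambda>(x, y). blinfun_mult_right (pdy G x y))"
  proof -
    have "isCont (\<lambda>p. blinfun_mult_right (pdy G (fst p) (snd p))) (x,x)"
      by (rule isCont_o2[OF c]) (rule linear_continuous_at[OF bounded_linear_blinfun_mult_right])
    then show ?thesis by (simp add: case_prod_beta' continuous_at_imp_continuous_within)
  qed
  have "((\<lambda>(x, y). G x y) has_derivative (\<lambda>(tx, ty). (*) (pdx G x x) tx + blinfun_apply (blinfun_mult_right (pdy G x x)) ty)) (at (x, x) within UNIV \<times> UNIV)"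
    by (rule has_derivative_partialsI[where f=G and x=x and y=x and X=UNIV and Y=UNIV, OF fx fy ct]) auto
  then have d: "((\<lambda>(x, y). G x y) has_derivative (\<lambda>(tx, ty). pdx G x x * tx + pdy G x x * ty)) (at (x, x))"
    by simp
  have "((\<lambda>x. (\<lambda>(x, y). G x y) (x, x)) has_derivative (\<lambda>h. (\<lambda>(tx, ty). pdx G x x * tx + pdy G x x * ty) (h, h))) (at x)"
    by (rule diff_chain_at[of "\<lambda>x. (x,x)" "\<lambda>h. (h,h)", unfolded o_def, OF _ d]) (auto intro!: derivative_eq_intros)
  then have "((\<lambda>x. G x x) has_derivative (\<lambda>h. pdx G x x * h + pdy G x x * h)) (at x)" by simp
  then show ?thesis unfolding has_field_derivative_def
    by (rule has_derivative_eq_rhs) (auto simp: fun_eq_iff algebra_simps)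
qed


lemma periodic_all:
  fixes Q :: "real \<Rightarrow> bool"
  assumes T: "T > 0" and per: "\<And>y. Q (y+T) = Q y" and base: "\<And>y. a \<le> y \<Longrightarrow> y < a + T \<Longrightarrow> Q y"
  shows "Q y"
proof -
  have ind: "\<forall>y. a - real n * T \<le> y \<and> y < a + (real n + 1) * T \<longrightarrow> Q y" for n
  proof (induction n)
    case 0 then show ?case using base by simp
  next
    case (Suc n)
    show ?case
    proof (intro allI impI)
      fix y assume y: "a - real (Suc n) * T \<le> y \<and> y < a + (real (Suc n) + 1) * T"
      consider "y < a - real n * T" | "a - real n * T \<le> y \<and> y < a + (real n + 1) * T" | "a + (real n + 1) * T \<le> y"
        by linarith
      then show "Q y"
      proof cases
        case 1
        have nT: "0 \<le> real n * T" using T by simp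
        have e: "(real n + 1) * T = real n * T + T" "(real (Suc n) + 1) * T = real n * T + 2*T" "real (Suc n) * T = real n * T + T"
          by (auto simp: algebra_simps)
        have "a - real n * T \<le> y + T \<and> y + T < a + (real n + 1) * T" using y 1 nT unfolding e by linarith
        then show ?thesis using Suc per by blast
      next
        case 2 then show ?thesis using Suc by blast
      next
        case 3
        have nT: "0 \<le> real n * T" using T by simp
        have e: "(real n + 1) * T = real n * T + T" "(real (Suc n) + 1) * T = real n * T + 2*T" "real (Suc n) * T = real n * T + T"
          by (auto simp: algebra_simps)
        have "a - real n * T \<le> y - T \<and> y - T < a + (real n + 1) * T" using y 3 nT T unfolding e by linarith
        then have "Q (y - T)" using Suc by blast
        then show ?thesis using per[of "y - T"] by simp
      qed
    qed
  qed
  obtain n where n: "\<bar>y - a\<bar> < real n * T" using ex_less_of_nat_mult[OF T] by blast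
  have "a - real n * T \<le> y \<and> y < a + (real n + 1) * T" using n T by (auto simp: algebra_simps abs_if split: if_splits)
  then show ?thesis using ind by blast
qed

lemma ratio_const:
  fixes f g f' g' :: "real \<Rightarrow> real"
  assumes T: "T > 0" and df: "\<And>t. (f has_real_derivative f' t) (at t)"
    and dg: "\<And>t. (g has_real_derivative g' t) (at t)"
    and W: "\<And>t. g t * f' t = f t * g' t"
    and pos: "\<And>t. a < t \<Longrightarrow> t < a + T \<Longrightarrow> g t > 0"
    and fp: "\<And>t. f (t+T) = - f t" and gp: "\<And>t. g (t+T) = - g t"
  shows "f t = (f (a + T/2) / g (a + T/2)) * g t"
proof -
  define c where "c = f (a + T/2) / g (a + T/2)"
  define h where "h = (\<lambda>t. f t - c * g t)"
  have dh: "(h has_real_derivative (f' t - c * g' t)) (at t)" for t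
    unfolding h_def by (auto intro!: derivative_eq_intros df dg)
  have int: "h t = 0" if "a < t" "t < a + T" for t
  proof -
    have "\<exists>c'. \<forall>x\<in>{a<..<a+T}. f x / g x = c'"
    proof (rule has_field_derivative_zero_constant)
      fix x assume x: "x \<in> {a<..<a+T}"
      then have gx: "g x \<noteq> 0" using pos by force
      have "((\<lambda>x. f x / g x) has_real_derivative (f' x * g x - f x * g' x) / (g x * g x)) (at x)"
        using DERIV_divide[OF df dg gx] .
      moreover have "(f' x * g x - f x * g' x) / (g x * g x) = 0" using W[of x] by (simp add: algebra_simps)
      ultimately show "((\<lambda>x. f x / g x) has_real_derivative 0) (at x within {a<..<a+T})"
        by (simp add: has_field_derivative_at_within)
    qed simp
    then obtain c' where c': "\<And>x. x \<in> {a<..<a+T} \<Longrightarrow> f x / g x = c'" by blast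
    have "c = c'" unfolding c_def using c'[of "a + T/2"] T by simp
    then have "f t / g t = c" using c' that by simp
    then show ?thesis using pos[OF that] unfolding h_def by (simp add: field_simps)
  qed
  have ha: "h a = 0"
  proof -
    have "(h \<longlongrightarrow> h a) (at_right a)"
      using DERIV_isCont[OF dh] by (simp add: isCont_def filterlim_at_split)
    moreover have "eventually (\<lambda>t. h t = 0) (at_right a)"
      using eventually_at_right_real[of a "a+T"] T int by (auto elim: eventually_mono)
    then have "(h \<longlongrightarrow> 0) (at_right a)" by (simp add: tendsto_eventually)
    ultimately show ?thesis using tendsto_unique[OF trivial_limit_at_right_real] by blast
  qed
  have "h t = 0"
  proof (rule periodic_all[OF T, of "\<lambda>t. h t = 0" a])
    show "(h (y + T) = 0) = (h y = 0)" for y unfolding h_def fp gp by auto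
    show "h y = 0" if "a \<le> y" "y < a + T" for y using int ha that by (cases "y = a") auto
  qed
  then show ?thesis unfolding h_def c_def by simp
qed


theorem mainTheorem2:
  fixes T :: real and F :: "real \<Rightarrow> real \<Rightarrow> real"
  assumes "closed_frieze T F"
  shows "\<exists>k :: real \<Rightarrow> real. (\<forall>x. k (x + T) = k x) \<and>
     (\<forall>x y. pdx (pdx F) x y = k x * F x y \<and> pdy (pdy F) x y = k y * F x y) \<and>
     (\<forall>u u'. (\<forall>t. (u has_real_derivative u' t) (at t) \<and>
                   (u' has_real_derivative k t * u t) (at t))
             \<longrightarrow> (\<forall>t. u (t + T) = - u t))"
proof -
  from assms have Tp: "T > 0" and sm: "smooth2 F"
    and L: "\<And>x y. F x y * pdy (pdx F) x y - pdx F x y * pdy F x y = 1"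
    and d0: "\<And>x. F x x = 0" and d1: "\<And>x. pdy F x x = 1"
    and pos: "\<And>x y. x < y \<Longrightarrow> y < x + T \<Longrightarrow> F x y > 0"
    and px: "\<forall>x y. F (x + T) y = - F x y" and py: "\<forall>x y. F x (y + T) = - F x y"
    unfolding closed_frieze_def by auto
  define Fx where "Fx = pdx F"
  define Fy where "Fy = pdy F"
  define A where "A = pdx Fx"
  define B where "B = pdy Fy"
  define C where "C = pdy Fx"
  have mF: "F \<in> iter_partials F" by (rule iter_partials.base)
  have mFx: "Fx \<in> iter_partials F" unfolding Fx_def by (rule iter_partials.dx[OF mF])
  have mFy: "Fy \<in> iter_partials F" unfolding Fy_def by (rule iter_partials.dy[OF mF])
  have mA: "A \<in> iter_partials F" unfolding A_def by (rule iter_partials.dx[OF mFx])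
  have mB: "B \<in> iter_partials F" unfolding B_def by (rule iter_partials.dy[OF mFy])
  have mC: "C \<in> iter_partials F" unfolding C_def by (rule iter_partials.dy[OF mFx])
  have mFyx: "pdx Fy \<in> iter_partials F" by (rule iter_partials.dx[OF mFy])
  have CS: "C = pdx Fy" unfolding C_def Fx_def Fy_def using schwarz[OF sm mF] by (intro ext) auto
  have AS: "pdx C = pdy A" unfolding C_def A_def using schwarz[OF sm mFx] by (intro ext) auto
  have BS: "pdy C = pdx B" unfolding CS B_def using schwarz[OF sm mFy] by (intro ext) auto
  have aF: "\<And>x y. F (x + T) y = - F x y" "\<And>x y. F x (y + T) = - F x y" using px py by auto
  have aA: "\<And>x y. A (x + T) y = - A x y" "\<And>x y. A x (y + T) = - A x y"
    using ip_anti[OF sm px py mA] by auto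
  have aB: "\<And>x y. B (x + T) y = - B x y" "\<And>x y. B x (y + T) = - B x y"
    using ip_anti[OF sm px py mB] by auto
  have aFy: "\<And>x y. Fy (x + T) y = - Fy x y" "\<And>x y. Fy x (y + T) = - Fy x y"
    using ip_anti[OF sm px py mFy] by auto
  have E1: "F x y * pdy A x y = A x y * Fy x y" for x y
  proof -
    have L1: "F s y * pdx Fy s y - Fx s y * Fy s y = 1" for s
      using L[of s y] CS unfolding C_def Fx_def Fy_def by simp
    have "((\<lambda>s. F s y * pdx Fy s y - Fx s y * Fy s y) has_real_derivative
       (Fx x y * pdx Fy x y + F x y * pdx (pdx Fy) x y - (A x y * Fy x y + Fx x y * pdx Fy x y))) (at x)"
      by (auto intro!: derivative_eq_intros ip_dx[OF sm mF, unfolded Fx_def[symmetric]]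
          ip_dx[OF sm mFyx] ip_dx[OF sm mFx, unfolded A_def[symmetric]] ip_dx[OF sm mFy])
    moreover have "((\<lambda>s. F s y * pdx Fy s y - Fx s y * Fy s y) has_real_derivative 0) (at x)"
      using L1 by simp
    ultimately have "Fx x y * pdx Fy x y + F x y * pdx (pdx Fy) x y - (A x y * Fy x y + Fx x y * pdx Fy x y) = 0"
      by (rule DERIV_unique)
    moreover have "pdx (pdx Fy) = pdy A" using AS CS by simp
    ultimately show ?thesis by (simp add: algebra_simps)
  qed
  have E2: "F x y * pdx B x y = B x y * Fx x y" for x y
  proof -
    have L1: "F x t * C x t - Fx x t * Fy x t = 1" for t
      using L[of x t] unfolding C_def Fx_def Fy_def by simp
    have "((\<lambda>t. F x t * C x t - Fx x t * Fy x t) has_real_derivative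
       (Fy x y * C x y + F x y * pdy C x y - (C x y * Fy x y + Fx x y * B x y))) (at y)"
      by (auto intro!: derivative_eq_intros ip_dy[OF sm mF, unfolded Fy_def[symmetric]]
          ip_dy[OF sm mC] ip_dy[OF sm mFx, unfolded C_def[symmetric]] ip_dy[OF sm mFy, unfolded B_def[symmetric]])
    moreover have "((\<lambda>t. F x t * C x t - Fx x t * Fy x t) has_real_derivative 0) (at y)"
      using L1 by simp
    ultimately have "Fy x y * C x y + F x y * pdy C x y - (C x y * Fy x y + Fx x y * B x y) = 0"
      by (rule DERIV_unique)
    then show ?thesis using BS by (simp add: algebra_simps)
  qed
  define k where "k x = A x (x + T/2) / F x (x + T/2)" for x
  define k2 where "k2 y = B (y - T + T/2) y / F (y - T + T/2) y" for y
  have hA: "A x y = k x * F x y" for x y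
    unfolding k_def
    by (rule ratio_const[OF Tp, of "A x" "pdy A x" "F x" "Fy x" x])
       (auto intro: ip_dy[OF sm mA] ip_dy[OF sm mF, unfolded Fy_def[symmetric]] pos aA aF
         simp: E1 mult.commute)
  have hB: "B x y = k2 y * F x y" for x y
  proof -
    have "(\<lambda>s. B s y) x = ((\<lambda>s. B s y) (y - T + T/2) / (\<lambda>s. F s y) (y - T + T/2)) * (\<lambda>s. F s y) x"
    by (rule ratio_const[OF Tp, of "\<lambda>s. B s y" "\<lambda>s. pdx B s y" "\<lambda>s. F s y" "\<lambda>s. Fx s y" "y - T"])
       (auto intro: ip_dx[OF sm mB] ip_dx[OF sm mF, unfolded Fx_def[symmetric]] pos aB aF
         simp: E2 mult.commute)
    then show ?thesis unfolding k2_def by simp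
  qed
  have dFx: "Fx x x = -1" for x
  proof -
    have "((\<lambda>x. F x x) has_real_derivative (Fx x x + Fy x x)) (at x)"
      using ip_diag[OF sm mF] unfolding Fx_def Fy_def .
    moreover have "((\<lambda>x. F x x) has_real_derivative 0) (at x)" using d0 by simp
    ultimately have "Fx x x + Fy x x = 0" by (rule DERIV_unique)
    then show ?thesis using d1 unfolding Fy_def by simp
  qed
  have dC: "C x x = 0" for x
  proof -
    have "((\<lambda>x. Fx x x) has_real_derivative (A x x + C x x)) (at x)"
      using ip_diag[OF sm mFx] unfolding A_def C_def .
    moreover have "((\<lambda>x. Fx x x) has_real_derivative 0) (at x)" using dFx by simp
    ultimately have "A x x + C x x = 0" by (rule DERIV_unique)
    then show ?thesis using hA[of x x] d0 by simp
  qed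
  have pA: "pdy A x y = k x * Fy x y" for x y
  proof -
    have "((\<lambda>t. A x t) has_real_derivative pdy A x y) (at y)" by (rule ip_dy[OF sm mA])
    moreover have "((\<lambda>t. A x t) has_real_derivative k x * Fy x y) (at y)"
      using hA DERIV_cmult[OF ip_dy[OF sm mF, of x y], of "k x"] unfolding Fy_def by simp
    ultimately show ?thesis by (rule DERIV_unique)
  qed
  have pB: "pdx B x y = k2 y * Fx x y" for x y
  proof -
    have "((\<lambda>s. B s y) has_real_derivative pdx B x y) (at x)" by (rule ip_dx[OF sm mB])
    moreover have "((\<lambda>s. B s y) has_real_derivative k2 y * Fx x y) (at x)"
      using hB DERIV_cmult[OF ip_dx[OF sm mF, of y x], of "k2 y"] unfolding Fx_def by simp
    ultimately show ?thesis by (rule DERIV_unique)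
  qed
  have kk: "k2 x = k x" for x
  proof -
    have "((\<lambda>x. C x x) has_real_derivative (pdx C x x + pdy C x x)) (at x)" by (rule ip_diag[OF sm mC])
    moreover have "((\<lambda>x. C x x) has_real_derivative 0) (at x)" using dC by simp
    ultimately have "pdx C x x + pdy C x x = 0" by (rule DERIV_unique)
    then show ?thesis using AS BS pA[of x x] pB[of x x] dFx[of x] d1[of x] unfolding Fy_def by simp
  qed
  have hB': "B x y = k y * F x y" for x y using hB kk by simp
  have kper: "k (x + T) = k x" for x
  proof -
    have p: "F x (x + T/2) > 0" using pos Tp by simp
    have "k (x + T) * (- F x (x + T/2)) = - (k x * F x (x + T/2))"
      using hA[of "x+T" "x + T/2"] hA[of x "x + T/2"] aA(1)[of x "x+T/2"] aF(1)[of x "x+T/2"] by (simp del: mult_minus_right) (metis mult_minus_right)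
    then show ?thesis using p by simp
  qed
  have mono: "u (t + T) = - u t" if du: "\<forall>t. (u has_real_derivative u' t) (at t) \<and> (u' has_real_derivative k t * u t) (at t)" for u u' t
  proof -
    define W where "W s = F t s * u' s - Fy t s * u s" for s
    have dW: "(W has_real_derivative 0) (at s)" for s
    proof -
      have "(W has_real_derivative (Fy t s * u' s + F t s * (k s * u s) - (B t s * u s + Fy t s * u' s))) (at s)"
        unfolding W_def using du
        by (auto intro!: derivative_eq_intros ip_dy[OF sm mF, unfolded Fy_def[symmetric]]
            ip_dy[OF sm mFy, unfolded B_def[symmetric]])
      then show ?thesis using hB'[of t s] by (simp add: algebra_simps)
    qed
    have "W (t + T) = W t" by (rule DERIV_isconst_all) (use dW in blast)
    moreover have "W t = - u t" unfolding W_def using d0 d1 unfolding Fy_def by simp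
    moreover have "W (t + T) = u (t + T)" unfolding W_def using aF(2)[of t t] aFy(2)[of t t] d0[of t] d1[of t]
      unfolding Fy_def by simp
    ultimately show ?thesis by simp
  qed
  show ?thesis
    by (rule exI[of _ k]) (use kper hA hB' mono in \<open>auto simp: A_def B_def Fx_def Fy_def\<close>)
qed
end
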